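(* Let $g>0$, $k_1,k_2,\omega\in\mathbb{R}$ with $k_2<0<k_1$, and consider the undamped system $$\ddot x-2\omega\dot y+(gk_1-\omega^2)x=0,\qquad \ddot y+2\omega\dot x+(gk_2-\omega^2)y=0.$$ (i) If $k_1>-k_2$, then all eigenvalues of this system are purely imaginary and simple if and only if $\omega^2>gk_1$. (ii) If $k_1<-k_2$ and $3k_1+k_2>0$, then all eigenvalues are purely imaginary and simple if and only if $$gk_1<\omega^2<-\frac{g}{8}\frac{(k_1-k_2)^2}{k_1+k_2}.$$ (iii) If $k_1<-k_2$ and $3k_1+k_2<0$, then for no $\omega$ are all eigenvalues purely imaginary and simple.
   Context: The eigenvalues are the roots $\lambda$ of $(\lambda^2+gk_1-\omega^2)(\lambda^2+gk_2-\omega^2)+4\omega^2\lambda^2=0$ (the model of a point mass near the bottom of a vessel rotating with angular velocity $\omega$, $k_1,k_2$ the curvatures of the vessel's surface at the equilibrium). *)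

theory Defs
  imports Complex_Main "HOL-Computational_Algebra.Polynomial"
begin

text \<open>Characteristic polynomial of the undamped system
  x'' - 2 w y' + (g k1 - w^2) x = 0,  y'' + 2 w x' + (g k2 - w^2) y = 0:
  (L^2 + g k1 - w^2)(L^2 + g k2 - w^2) + 4 w^2 L^2, with complex coefficients.\<close>
definition char_poly :: "real \<Rightarrow> real \<Rightarrow> real \<Rightarrow> real \<Rightarrow> complex poly" where
  "char_poly g k1 k2 w =
     [:complex_of_real (g*k1 - w^2), 0, 1:] * [:complex_of_real (g*k2 - w^2), 0, 1:]
     + smult (complex_of_real (4 * w^2)) [:0, 0, 1:]"

definition eigenvalue :: "real \<Rightarrow> real \<Rightarrow> real \<Rightarrow> real \<Rightarrow> complex \<Rightarrow> bool" where
  "eigenvalue g k1 k2 w z \<longleftrightarrow> poly (char_poly g k1 k2 w) z = 0"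

definition all_eigs_imag_simple :: "real \<Rightarrow> real \<Rightarrow> real \<Rightarrow> real \<Rightarrow> bool" where
  "all_eigs_imag_simple g k1 k2 w \<longleftrightarrow>
     (\<forall>z. eigenvalue g k1 k2 w z \<longrightarrow> Re z = 0 \<and> order z (char_poly g k1 k2 w) = 1)"

end

theory Submission
  imports Defs
begin

lemma sq_re0: "Re z = 0 \<Longrightarrow> z^2 = complex_of_real (- (Im z * Im z))"
  by (simp add: complex_eq_iff power2_eq_square)

lemma sq_neg: assumes "z^2 = complex_of_real r" "r < 0" shows "Re z = 0"
proof -
  have a: "Re z * Re z - Im z * Im z = r" "Re z = 0 \<or> Im z = 0"
    using arg_cong[OF assms(1), of Re] arg_cong[OF assms(1), of Im]
    by (auto simp add: power2_eq_square)
  show ?thesis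
  proof (rule ccontr)
    assume "Re z \<noteq> 0" then have "Im z = 0" using a(2) by simp
    then have "Re z * Re z = r" using a(1) by simp
    moreover have "Re z * Re z \<ge> 0" by simp
    ultimately show False using assms(2) by linarith
  qed
qed

lemma deriv_fact: "4*z^3 + 2*(c::complex)*z = 2*z*(2*z^2 + c)"
  by (simp add: power2_eq_square power3_eq_cube distrib_left)

lemma key2:
  fixes B C :: real
  assumes A: "C > 0" "B > 0" "B*B - 4*C > 0"
  shows "\<forall>z::complex. z^4 + of_real B * z^2 + of_real C = 0 \<longrightarrow> Re z = 0 \<and> 4*z^3 + 2*of_real B*z \<noteq> 0"
proof -
  define s where "s = sqrt (B*B - 4*C)"
  have ss: "s * s = B*B - 4*C" using A s_def by simp
  have spos: "s > 0" using A s_def by simp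
  have sB: "s < B"
  proof (rule ccontr)
    assume "\<not> s < B" then have "B*B \<le> s*s" using A(2) by (simp add: mult_mono)
    then show False using ss A by linarith
  qed
  show ?thesis
  proof (intro allI impI)
    fix z :: complex
    assume z: "z^4 + of_real B * z^2 + of_real C = 0"
    define w where "w = z^2"
    have z4: "z^4 = w*w" unfolding w_def by (simp add: power4_eq_xxxx power2_eq_square)
    define a where "a = (-B+s)/2"
    define b where "b = (-B-s)/2"
    have ab1: "a + b = -B" unfolding a_def b_def by (simp add: field_simps)
    have ab2: "a * b = C" unfolding a_def b_def using ss by (simp add: field_simps)
    have gen: "(w - x)*(w - y) = w*w - (x+y)*w + x*y" for x y :: complex by algebra
    have fac: "z^4 + of_real B * z^2 + of_real C =
       (w - of_real a) * (w - of_real b)"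
      unfolding z4 gen w_def[symmetric] of_real_add[symmetric] of_real_mult[symmetric] ab1 ab2 by simp
    have wcase: "w = of_real a \<or> w = of_real b" using z fac by simp
    have n1: "a < 0" using sB unfolding a_def by simp
    have n2: "b < 0" using sB spos unfolding b_def by simp
    have sa: "2*a + B = s" and sb: "2*b+B = -s" unfolding a_def b_def by (simp_all add: field_simps)
    have both: "Re z = 0 \<and> 2*w + of_real B \<noteq> 0"
      using wcase
    proof (elim disjE)
      assume h: "w = of_real a"
      have r: "Re z = 0" by (rule sq_neg[OF h[unfolded w_def] n1])
      have "2*w + of_real B = of_real (2*a + B)" using h by simp
      then show ?thesis using sa spos r by simp
    next
      assume h: "w = of_real b"
      have r: "Re z = 0" by (rule sq_neg[OF h[unfolded w_def] n2])
      have "2*w + of_real B = of_real (2*b + B)" using h by simp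
      then show ?thesis using sb spos r by simp
    qed
    then have re: "Re z = 0" and nz2: "2*w + of_real B \<noteq> 0" by auto
    have "z \<noteq> 0"
    proof
      assume h0: "z = 0" have "complex_of_real C = 0" using z unfolding h0 by simp
      then show False using A(1) by simp
    qed
    moreover have "4*z^3 + 2*of_real B*z = 2*z*(2*w + of_real B)"
      unfolding w_def by (rule deriv_fact)
    ultimately show "Re z = 0 \<and> 4*z^3 + 2*of_real B*z \<noteq> 0" using re nz2 by simp
  qed
qed

lemma p4: "(z::complex)^4 = z^2 * z^2" by (simp add: power_add[symmetric])

lemma key1:
  fixes B C :: real
  assumes H: "\<forall>z::complex. z^4 + of_real B * z^2 + of_real C = 0 \<longrightarrow> Re z = 0 \<and> 4*z^3 + 2*of_real B*z \<noteq> 0"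
  shows "C > 0 \<and> B > 0 \<and> B*B - 4*C > 0"
proof -
  define D where "D = B*B - 4*C"
  have Dpos: "D > 0"
  proof (rule ccontr)
    assume "\<not> D > 0"
    then consider "D < 0" | "D = 0" by linarith
    then show False
    proof cases
      case 1
      define r where "r = sqrt (-D)"
      have rr: "r * r = -D" using 1 r_def by simp
      have rpos: "r > 0" using 1 r_def by simp
      define u where "u = Complex (-B/2) (r/2)"
      define z where "z = csqrt u"
      have zu: "z^2 = u" by (simp add: z_def)
      have "u*u + of_real B * u + of_real C = 0"
        unfolding u_def using rr D_def
        by (simp add: complex_eq_iff field_simps)
      then have "z^4 + of_real B * z^2 + of_real C = 0"
        unfolding p4 zu .
      then have "Re z = 0" using H by blast
      then have "Im (z^2) = 0" using sq_re0 by (metis Im_complex_of_real)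
      then have "Im u = 0" using zu by simp
      moreover have "Im u = r / 2" by (simp add: u_def)
      ultimately show False using rpos by simp
    next
      case 2
      define u where "u = complex_of_real (-B/2)"
      define z where "z = csqrt u"
      have zu: "z^2 = u" by (simp add: z_def)
      have "(-B/2)*(-B/2) + B * (-B/2) + C = 0" using 2 D_def by (simp add: field_simps)
      then have "u*u + of_real B * u + of_real C = 0"
        unfolding u_def by (metis of_real_0 of_real_add of_real_mult)
      then have "z^4 + of_real B * z^2 + of_real C = 0"
        unfolding p4 zu .
      moreover have "2*z^2 + of_real B = 0" using zu u_def by simp
      ultimately show False using H deriv_fact[of z "of_real B"] by auto
    qed
  qed
  define s where "s = sqrt D"
  have ss: "s * s = D" using Dpos s_def by simp
  have neg: "u < 0" if "u*u + B*u + C = 0" for u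
  proof -
    define z where "z = csqrt (of_real u)"
    have zu: "z^2 = of_real u" by (simp add: z_def)
    have "(of_real u) * (of_real u) + of_real B * of_real u + of_real C = (0::complex)"
      using that by (metis of_real_0 of_real_add of_real_mult)
    then have "z^4 + of_real B * z^2 + of_real C = 0"
      unfolding p4 zu .
    then have h: "Re z = 0" "4*z^3 + 2*of_real B*z \<noteq> 0" using H by blast+
    then have "z \<noteq> 0" by auto
    then have "Im z \<noteq> 0" using h(1) complex_eq_iff by force
    then have pos: "Im z * Im z > 0" using not_real_square_gt_zero by blast
    have "complex_of_real u = complex_of_real (- (Im z * Im z))" using sq_re0[OF h(1)] zu by simp
    then have "u = - (Im z * Im z)" by (simp only: of_real_eq_iff)
    then show "u < 0" using pos by simp
  qed
  have u1: "((-B+s)/2)*((-B+s)/2) + B*((-B+s)/2) + C = 0" using ss D_def by (simp add: field_simps) 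
  have u2: "((-B-s)/2)*((-B-s)/2) + B*((-B-s)/2) + C = 0" using ss D_def by (simp add: field_simps)
  have n1: "(-B+s)/2 < 0" using neg[OF u1] .
  have n2: "(-B-s)/2 < 0" using neg[OF u2] .
  have Ceq: "C = ((-B+s)/2)*((-B-s)/2)" using ss D_def by (simp add: field_simps)
  have "((-B+s)/2)*((-B-s)/2) > 0" using n1 n2 by (rule mult_neg_neg)
  then have "C > 0" using Ceq by simp
  moreover have "B > 0" using n1 n2 by (simp add: field_simps)
  ultimately show ?thesis using Dpos D_def by simp
qed

lemma key:
  fixes B C :: real
  shows "(\<forall>z::complex. z^4 + of_real B * z^2 + of_real C = 0 \<longrightarrow> Re z = 0 \<and> 4*z^3 + 2*of_real B*z \<noteq> 0)
     \<longleftrightarrow> (C > 0 \<and> B > 0 \<and> B*B - 4*C > 0)"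
  using key1 key2 by blast

lemma char_poly_eq: "char_poly g k1 k2 w =
  [:complex_of_real ((g*k1 - w^2)*(g*k2-w^2)), 0, complex_of_real (g*(k1+k2) + 2*w^2), 0, 1:]"
  unfolding char_poly_def
  by (simp add: algebra_simps)

lemma poly_cp: "poly [:c, 0, b, 0, 1:] (z::complex) = z^4 + b * z^2 + c"
  by (simp add: algebra_simps power2_eq_square power4_eq_xxxx)

lemma poly_dcp: "poly (pderiv [:c, 0, b, 0, 1:]) (z::complex) = 4*z^3 + 2*b*z"
  by (simp add: pderiv_pCons algebra_simps power3_eq_cube)

lemma simple_iff:
  fixes c b :: complex
  assumes "p = [:c, 0, b, 0, 1:]"
  shows "(\<forall>z. poly p z = 0 \<longrightarrow> Re z = 0 \<and> order z p = 1) \<longleftrightarrow>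
         (\<forall>z. z^4 + b * z^2 + c = 0 \<longrightarrow> Re z = 0 \<and> 4*z^3 + 2*b*z \<noteq> 0)"
proof -
  have p0: "p \<noteq> 0" using assms by simp
  have d0: "pderiv p \<noteq> 0" using assms by (simp add: pderiv_pCons)
  have "order z p = 1 \<longleftrightarrow> poly (pderiv p) z \<noteq> 0" if "poly p z = 0" for z
  proof -
    have "order z p = Suc (order z (pderiv p))" using order_pderiv[OF p0 that] .
    moreover have "poly (pderiv p) z = 0 \<longleftrightarrow> order z (pderiv p) \<noteq> 0" using order_root d0 by blast
    ultimately show ?thesis by auto
  qed
  then show ?thesis using assms poly_cp poly_dcp by metis
qed



lemma arith_conds:
  fixes g k1 k2 W B C :: real
  assumes g: "g > 0" and k2: "k2 < 0" and k1: "0 < k1" and W: "W \<ge> 0"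
    and Bd: "B = g*(k1+k2) + 2*W" and Cd: "C = (g*k1 - W)*(g*k2 - W)"
  shows "(k1 > - k2 \<longrightarrow> ((C > 0 \<and> B > 0 \<and> B*B - 4*C > 0) \<longleftrightarrow> W > g*k1))
       \<and> (k1 < - k2 \<and> 3*k1 + k2 > 0 \<longrightarrow> ((C > 0 \<and> B > 0 \<and> B*B - 4*C > 0) \<longleftrightarrow>
             g*k1 < W \<and> W < - (g / 8) * ((k1 - k2)^2 / (k1 + k2))))
       \<and> (k1 < - k2 \<and> 3*k1 + k2 < 0 \<longrightarrow> \<not> (C > 0 \<and> B > 0 \<and> B*B - 4*C > 0))"
proof -
  have gk2: "g*k2 - W < 0" using g k2 W mult_pos_neg[OF g k2] by linarith
  have Cpos: "C > 0 \<longleftrightarrow> W > g*k1"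
  proof -
    have "C > 0 \<longleftrightarrow> g*k1 - W < 0" unfolding Cd using gk2 by (simp add: zero_less_mult_iff)
    then show ?thesis by linarith
  qed
  have Dexp: "B*B - 4*C = g*g*((k1-k2)*(k1-k2)) + 8*W*g*(k1+k2)" unfolding Bd Cd by algebra
  have dpos: "(k1-k2)*(k1-k2) > 0" using k1 k2 by simp
  have gg: "g*g > 0" using g by simp
  have part1: "k1 > - k2 \<longrightarrow> ((C > 0 \<and> B > 0 \<and> B*B - 4*C > 0) \<longleftrightarrow> W > g*k1)"
  proof
    assume s: "k1 > - k2"
    then have sp: "k1 + k2 > 0" by simp
    have "g*(k1+k2) > 0" using g sp by simp
    then have Bp: "B > 0" using Bd W by linarith
    have "8*W*g*(k1+k2) \<ge> 0" using W g sp by simp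
    moreover have "g*g*((k1-k2)*(k1-k2)) > 0" using gg dpos by simp
    ultimately have "B*B - 4*C > 0" using Dexp by linarith
    then show "(C > 0 \<and> B > 0 \<and> B*B - 4*C > 0) \<longleftrightarrow> W > g*k1" using Bp Cpos by blast
  qed
  have part2: "k1 < - k2 \<and> 3*k1 + k2 > 0 \<longrightarrow> ((C > 0 \<and> B > 0 \<and> B*B - 4*C > 0) \<longleftrightarrow>
             g*k1 < W \<and> W < - (g / 8) * ((k1 - k2)^2 / (k1 + k2)))"
  proof
    assume a: "k1 < - k2 \<and> 3*k1 + k2 > 0"
    then have sn: "k1 + k2 < 0" by simp
    have Dequiv: "B*B - 4*C > 0 \<longleftrightarrow> W < - (g / 8) * ((k1 - k2)^2 / (k1 + k2))"
    proof -
      have "W < - (g / 8) * ((k1 - k2)^2 / (k1 + k2)) \<longleftrightarrow> W * (8*(k1+k2)) > - g * (k1-k2)^2"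
        using sn by (simp add: field_simps)
      also have "\<dots> \<longleftrightarrow> g * (W * (8*(k1+k2))) > g * (- g * (k1-k2)^2)"
        by (simp only: mult_less_cancel_left_pos[OF g])
      also have "\<dots> \<longleftrightarrow> B*B - 4*C > 0" unfolding Dexp by (simp add: power2_eq_square algebra_simps)
      finally show ?thesis by simp
    qed
    have Bimp: "W > g*k1 \<Longrightarrow> B > 0"
    proof -
      assume "W > g*k1"
      then have "B > g*(k1+k2) + 2*(g*k1)" using Bd by simp
      moreover have "g*(k1+k2) + 2*(g*k1) = g*(3*k1+k2)" by algebra
      moreover have "g*(3*k1+k2) > 0" using g a by simp
      ultimately show "B > 0" by linarith
    qed
    show "(C > 0 \<and> B > 0 \<and> B*B - 4*C > 0) \<longleftrightarrow>
             g*k1 < W \<and> W < - (g / 8) * ((k1 - k2)^2 / (k1 + k2))"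
      using Dequiv Bimp Cpos by blast
  qed
  have part3: "k1 < - k2 \<and> 3*k1 + k2 < 0 \<longrightarrow> \<not> (C > 0 \<and> B > 0 \<and> B*B - 4*C > 0)"
  proof (intro impI notI)
    assume a: "k1 < - k2 \<and> 3*k1 + k2 < 0" and c: "C > 0 \<and> B > 0 \<and> B*B - 4*C > 0"
    define t where "t = -(k1+k2)"
    define d where "d = k1 - k2"
    have tp: "t > 0" using a t_def by simp
    have dp: "d > 0" using k1 k2 d_def by simp
    have d2t: "d < 2*t" using a d_def t_def by simp
    have "g*t = - (g*(k1+k2))" unfolding t_def by (simp add: algebra_simps)
    then have B2: "2*W > g*t" using c Bd by linarith
    then have "4*t*(2*W) > 4*t*(g*t)" using tp by simp
    then have e1: "8*W*t > 4*g*(t*t)" by (simp add: algebra_simps)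
    have "g*g*(d*d) - 8*W*g*t = B*B - 4*C" unfolding Dexp d_def t_def by algebra
    then have "g*g*(d*d) - 8*W*g*t > 0" using c by linarith
    then have "g*(g*(d*d) - 8*W*t) > 0" by (simp add: algebra_simps)
    then have "g*(d*d) - 8*W*t > 0" using g by (simp add: zero_less_mult_iff)
    then have "g*(d*d) > 4*g*(t*t)" using e1 by linarith
    then have "g*(d*d) > g*(4*(t*t))" by (simp add: algebra_simps)
    then have dd: "d*d > 4*(t*t)" using g by simp
    have "d*d < (2*t)*(2*t)" using mult_strict_mono[OF d2t d2t] dp tp by simp
    then show False using dd by (simp add: algebra_simps)
  qed
  show ?thesis using part1 part2 part3 by blast
qed

lemma eig_iff: "all_eigs_imag_simple g k1 k2 w \<longleftrightarrow>
   ((g*k1 - w^2)*(g*k2-w^2) > 0 \<and> g*(k1+k2) + 2*w^2 > 0 \<and>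
    (g*(k1+k2) + 2*w^2)*(g*(k1+k2) + 2*w^2) - 4*((g*k1 - w^2)*(g*k2-w^2)) > 0)"
  unfolding all_eigs_imag_simple_def eigenvalue_def
  using simple_iff[OF char_poly_eq[of g k1 k2 w]] key[of "g*(k1+k2) + 2*w^2" "(g*k1 - w^2)*(g*k2-w^2)"]
  by simp

theorem mainTheorem7:
  fixes g k1 k2 :: real
  assumes "g > 0" and "k2 < 0" and "0 < k1"
  shows "(k1 > - k2 \<longrightarrow>
            (\<forall>w::real. all_eigs_imag_simple g k1 k2 w \<longleftrightarrow> w^2 > g * k1))
       \<and> (k1 < - k2 \<and> 3 * k1 + k2 > 0 \<longrightarrow>
            (\<forall>w::real. all_eigs_imag_simple g k1 k2 w \<longleftrightarrow>
                 g * k1 < w^2 \<and> w^2 < - (g / 8) * ((k1 - k2)^2 / (k1 + k2))))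
       \<and> (k1 < - k2 \<and> 3 * k1 + k2 < 0 \<longrightarrow>
            (\<forall>w::real. \<not> all_eigs_imag_simple g k1 k2 w))"
proof -
  have A: "\<And>w::real. (k1 > - k2 \<longrightarrow> (((g*k1 - w^2)*(g*k2-w^2) > 0 \<and> g*(k1+k2) + 2*w^2 > 0 \<and>
    (g*(k1+k2) + 2*w^2)*(g*(k1+k2) + 2*w^2) - 4*((g*k1 - w^2)*(g*k2-w^2)) > 0) \<longleftrightarrow> w^2 > g*k1))
       \<and> (k1 < - k2 \<and> 3*k1 + k2 > 0 \<longrightarrow> (((g*k1 - w^2)*(g*k2-w^2) > 0 \<and> g*(k1+k2) + 2*w^2 > 0 \<and>
    (g*(k1+k2) + 2*w^2)*(g*(k1+k2) + 2*w^2) - 4*((g*k1 - w^2)*(g*k2-w^2)) > 0) \<longleftrightarrow>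
             g*k1 < w^2 \<and> w^2 < - (g / 8) * ((k1 - k2)^2 / (k1 + k2))))
       \<and> (k1 < - k2 \<and> 3*k1 + k2 < 0 \<longrightarrow> \<not> ((g*k1 - w^2)*(g*k2-w^2) > 0 \<and> g*(k1+k2) + 2*w^2 > 0 \<and>
    (g*(k1+k2) + 2*w^2)*(g*(k1+k2) + 2*w^2) - 4*((g*k1 - w^2)*(g*k2-w^2)) > 0))"
    using arith_conds[OF assms zero_le_power2 refl refl] by blast
  show ?thesis unfolding eig_iff using A by blast
qed

end
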